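(* Let $\beta>0$ and let $P,Q,F$ be probability measures on $\mathbb{R}$ with densities $p,q,f$ (or all discrete with probability mass functions on a countable set). Then: (1) $\mathrm{CM}_\beta(P,Q)\ge 0$, and $\mathrm{CM}_\beta(P,Q)=0$ if and only if $p=q$ almost everywhere; (2) $\mathrm{CM}_\beta(P,Q)=\mathrm{CM}_\beta(Q,P)$; (3) $\mathrm{CM}_\beta(P,Q)\le \mathrm{CM}_\beta(P,F)+\mathrm{CM}_\beta(F,Q)$; (4) $0\le \mathrm{CM}_\beta(P,Q)\le 1$; (5) $\lim_{\beta\to 0^+}\mathrm{CM}_\beta(P,Q)=\frac12\int_{\mathbb{R}}|p(x)-q(x)|\,dx=\mathrm{TV}(P,Q)$ (with the sum in the discrete case); (6) if $P_n,Q_n$ have densities (resp. mass functions) $p_n,q_n$ with $p_n\to p$ and $q_n\to q$ in total variation (i.e. $\int|p_n-p|\to0$ and $\int|q_n-q|\to0$, resp. sums), then $\mathrm{CM}_\beta(P_n,Q_n)\to \mathrm{CM}_\beta(P,Q)$.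
   Context: For probability measures $P,Q$ with densities $p,q$ and $\beta>0$, the complex metric is $\mathrm{CM}_\beta(P,Q)=\frac12\int_{\mathbb{R}}\left|p(x)e^{i\beta p(x)}-q(x)e^{i\beta q(x)}\right|dx$; in the discrete case with probability mass functions $p,q$ on a countable set it is $\frac12\sum_x\left|p(x)e^{i\beta p(x)}-q(x)e^{i\beta q(x)}\right|$. $\mathrm{TV}(P,Q)=\frac12\int|p-q|$ denotes the total variation distance. *)

theory Defs
  imports "HOL-Probability.Probability"
begin

definition is_density :: "(real \<Rightarrow> real) \<Rightarrow> bool" where
  "is_density p \<longleftrightarrow> p \<in> borel_measurable lborel \<and> (\<forall>x. 0 \<le> p x)
     \<and> integrable lborel p \<and> (\<integral>x. p x \<partial>lborel) = 1"

definition CM :: "real \<Rightarrow> (real \<Rightarrow> real) \<Rightarrow> (real \<Rightarrow> real) \<Rightarrow> real" where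
  "CM \<beta> p q = 1/2 * (\<integral>x. cmod (complex_of_real (p x) * exp (\<i> * complex_of_real (\<beta> * p x))
                        - complex_of_real (q x) * exp (\<i> * complex_of_real (\<beta> * q x))) \<partial>lborel)"

definition TV :: "(real \<Rightarrow> real) \<Rightarrow> (real \<Rightarrow> real) \<Rightarrow> real" where
  "TV p q = 1/2 * (\<integral>x. \<bar>p x - q x\<bar> \<partial>lborel)"

definition CMd :: "real \<Rightarrow> 'a pmf \<Rightarrow> 'a pmf \<Rightarrow> real" where
  "CMd \<beta> P Q = 1/2 * (\<Sum>\<^sub>\<infinity>x. cmod (complex_of_real (pmf P x) * exp (\<i> * complex_of_real (\<beta> * pmf P x))
                        - complex_of_real (pmf Q x) * exp (\<i> * complex_of_real (\<beta> * pmf Q x))))"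

definition TVd :: "'a pmf \<Rightarrow> 'a pmf \<Rightarrow> real" where
  "TVd P Q = 1/2 * (\<Sum>\<^sub>\<infinity>x. \<bar>pmf P x - pmf Q x\<bar>)"

end

theory Submission imports Defs begin

definition hh :: "real \<Rightarrow> real \<Rightarrow> complex" where
  "hh b t = complex_of_real t * exp (\<i> * complex_of_real (b * t))"

definition GG :: "real \<Rightarrow> ('b \<Rightarrow> real) \<Rightarrow> ('b \<Rightarrow> real) \<Rightarrow> 'b \<Rightarrow> real" where
  "GG b p q x = cmod (hh b (p x) - hh b (q x))"

definition dens :: "'b measure \<Rightarrow> ('b \<Rightarrow> real) \<Rightarrow> bool" where
  "dens M p \<longleftrightarrow> p \<in> borel_measurable M \<and> (\<forall>x. 0 \<le> p x) \<and> integrable M p"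

lemma ex1_le: "cmod (exp (\<i> * complex_of_real t) - 1) \<le> \<bar>t\<bar>"
  using iexp_approx1[of t 0] by simp

lemma ex1_le2: "cmod (exp (\<i> * complex_of_real t) - 1) \<le> 2"
  using norm_triangle_ineq4[of "exp (\<i> * complex_of_real t)" 1] by simp

lemma hh_norm[simp]: "cmod (hh b t) = \<bar>t\<bar>"
  by (simp add: hh_def norm_mult)

lemma hh_sub0: "cmod (hh b t - complex_of_real t) = \<bar>t\<bar> * cmod (exp (\<i> * complex_of_real (b * t)) - 1)"
proof -
  have "hh b t - complex_of_real t = complex_of_real t * (exp (\<i> * complex_of_real (b * t)) - 1)"
    by (simp add: hh_def algebra_simps)
  then show ?thesis by (simp add: norm_mult)
qed

lemma hh_lip: "cmod (hh b s - hh b t) \<le> \<bar>s - t\<bar> + \<bar>t\<bar> * cmod (exp (\<i> * complex_of_real (b * (s - t))) - 1)"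
proof -
  have e: "exp (\<i> * complex_of_real (b * s)) = exp (\<i> * complex_of_real (b * t)) * exp (\<i> * complex_of_real (b * (s - t)))"
    by (simp add: exp_add[symmetric] algebra_simps)
  have "hh b s - hh b t = complex_of_real (s - t) * exp (\<i> * complex_of_real (b * s))
      + complex_of_real t * exp (\<i> * complex_of_real (b * t)) * (exp (\<i> * complex_of_real (b * (s - t))) - 1)"
    unfolding hh_def e by (simp add: algebra_simps)
  also have "cmod \<dots> \<le> cmod (complex_of_real (s - t) * exp (\<i> * complex_of_real (b * s)))
      + cmod (complex_of_real t * exp (\<i> * complex_of_real (b * t)) * (exp (\<i> * complex_of_real (b * (s - t))) - 1))"
    by (rule norm_triangle_ineq)
  also have "\<dots> = \<bar>s - t\<bar> + \<bar>t\<bar> * cmod (exp (\<i> * complex_of_real (b * (s - t))) - 1)"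
    by (simp add: norm_mult flip: of_real_diff)
  finally show ?thesis .
qed

lemma hh_meas[measurable]: shows "f \<in> borel_measurable M \<Longrightarrow> (\<lambda>x. hh b (f x)) \<in> borel_measurable M"
proof -
  have "continuous_on UNIV (hh b)" unfolding hh_def by (intro continuous_intros)
  then show "f \<in> borel_measurable M \<Longrightarrow> (\<lambda>x. hh b (f x)) \<in> borel_measurable M"
    using borel_measurable_continuous_on by blast
qed

lemma GG_meas[measurable]:
  assumes "p \<in> borel_measurable M" "q \<in> borel_measurable M"
  shows "GG b p q \<in> borel_measurable M"
proof -
  have [measurable]: "(\<lambda>x. hh b (p x)) \<in> borel_measurable M" "(\<lambda>x. hh b (q x)) \<in> borel_measurable M"
    using hh_meas assms by auto
  show ?thesis unfolding GG_def[abs_def] by measurable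
qed

lemma GG_le: "(\<forall>x. 0 \<le> p x) \<Longrightarrow> (\<forall>x. 0 \<le> q x) \<Longrightarrow> GG b p q x \<le> p x + q x"
  unfolding GG_def using norm_triangle_ineq4[of "hh b (p x)" "hh b (q x)"] by simp

lemma GG_int: "dens M p \<Longrightarrow> dens M q \<Longrightarrow> integrable M (GG b p q)"
  unfolding dens_def
  apply (rule Bochner_Integration.integrable_bound[of _ "\<lambda>x. p x + q x"])
  using GG_le[of p q b] by (auto simp: GG_def)

lemma tail_lim:
  assumes "dens M p"
  shows "(\<lambda>m::nat. \<integral>x. max (p x - real m) 0 \<partial>M) \<longlonglongrightarrow> 0"
proof -
  have pm[measurable]: "p \<in> borel_measurable M" and pn: "\<And>x. 0 \<le> p x" and pi: "integrable M p"
    using assms by (auto simp: dens_def)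
  have "(\<lambda>m::nat. \<integral>x. max (p x - real m) 0 \<partial>M) \<longlonglongrightarrow> (\<integral>x. 0 \<partial>M)"
  proof (rule integral_dominated_convergence[where w=p])
    show "AE x in M. (\<lambda>m::nat. max (p x - real m) 0) \<longlonglongrightarrow> 0"
    proof (rule AE_I2)
      fix x
      have "eventually (\<lambda>m::nat. max (p x - real m) 0 = 0) sequentially"
        unfolding eventually_sequentially
      proof (intro exI allI impI)
        fix m assume "nat \<lceil>p x\<rceil> \<le> m"
        then have "p x \<le> real m" by linarith
        then show "max (p x - real m) 0 = 0" by simp
      qed
      then show "(\<lambda>m::nat. max (p x - real m) 0) \<longlonglongrightarrow> 0" by (rule tendsto_eventually)
    qed
    show "AE x in M. norm (max (p x - real m) 0) \<le> p x" for m::nat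
      using pn by (intro AE_I2) auto
  qed (use pi in auto)
  then show ?thesis by simp
qed

lemma K:
  fixes M :: "'b measure" and p :: "'b \<Rightarrow> real" and \<phi> :: "'c \<Rightarrow> 'b \<Rightarrow> real"
  assumes d: "dens M p"
    and phm: "\<And>t. \<phi> t \<in> borel_measurable M"
    and phb: "\<And>t x. 0 \<le> \<phi> t x \<and> \<phi> t x \<le> 2"
    and phi: "\<And>t. integrable M (\<phi> t)"
    and lim: "((\<lambda>t. \<integral>x. \<phi> t x \<partial>M) \<longlongrightarrow> 0) F"
  shows "((\<lambda>t. \<integral>x. p x * \<phi> t x \<partial>M) \<longlongrightarrow> 0) F"
proof -
  have pm[measurable]: "p \<in> borel_measurable M" and pn: "\<And>x. 0 \<le> p x" and pi: "integrable M p"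
    using d by (auto simp: dens_def)
  note phm[measurable]
  have ipp: "integrable M (\<lambda>x. p x * \<phi> t x)" for t
  proof (rule Bochner_Integration.integrable_bound[of _ "\<lambda>x. 2 * p x"])
    show "integrable M (\<lambda>x. 2 * p x)" using pi by simp
    show "AE x in M. norm (p x * \<phi> t x) \<le> norm (2 * p x)"
    proof (rule AE_I2)
      fix x
      have "p x * \<phi> t x \<le> p x * 2" using pn[of x] phb[of t x] by (intro mult_left_mono) auto
      then show "norm (p x * \<phi> t x) \<le> norm (2 * p x)" using pn[of x] phb[of t x] by simp
    qed
  qed simp
  have imx: "integrable M (\<lambda>x. max (p x - real m) 0)" for m::nat
  proof (rule Bochner_Integration.integrable_bound[of _ p])
    show "AE x in M. norm (max (p x - real m) 0) \<le> norm (p x)" using pn by (intro AE_I2) auto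
  qed (use pi in auto)
  show ?thesis
    unfolding tendsto_iff
  proof (intro allI impI)
    fix e :: real assume e: "0 < e"
    have "eventually (\<lambda>m::nat. (\<integral>x. max (p x - real m) 0 \<partial>M) < e / 8) sequentially"
      using order_tendstoD(2)[OF tail_lim[OF d], of "e/8"] e by simp
    then obtain m :: nat where m: "(\<integral>x. max (p x - real m) 0 \<partial>M) < e / 8"
      unfolding eventually_sequentially by auto
    have "eventually (\<lambda>t. (\<integral>x. \<phi> t x \<partial>M) < e / (4 * (real m + 1))) F"
      using order_tendstoD(2)[OF lim, of "e / (4 * (real m + 1))"] e by simp
    then show "eventually (\<lambda>t. dist (\<integral>x. p x * \<phi> t x \<partial>M) 0 < e) F"
    proof eventually_elim
      case (elim t)
      have pw: "p x * \<phi> t x \<le> 2 * real m * \<phi> t x + 4 * max (p x - real m) 0" for x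
      proof (cases "p x \<le> 2 * real m")
        case True
        then have "p x * \<phi> t x \<le> 2 * real m * \<phi> t x" using phb[of t x] by (intro mult_right_mono) auto
        moreover have "0 \<le> max (p x - real m) 0" by simp
        ultimately show ?thesis by (smt (verit))
      next
        case False
        have "p x * \<phi> t x \<le> p x * 2" using pn[of x] phb[of t x] by (intro mult_left_mono) auto
        then show ?thesis using False phb[of t x] by (smt (verit) mult_nonneg_nonneg of_nat_0_le_iff)
      qed
      have nn: "0 \<le> (\<integral>x. p x * \<phi> t x \<partial>M)"
        using pn phb by (intro Bochner_Integration.integral_nonneg) (simp add: mult_nonneg_nonneg)
      have "(\<integral>x. p x * \<phi> t x \<partial>M) \<le> (\<integral>x. 2 * real m * \<phi> t x + 4 * max (p x - real m) 0 \<partial>M)"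
        using pw ipp phi imx by (intro Bochner_Integration.integral_mono) auto
      also have "\<dots> = 2 * real m * (\<integral>x. \<phi> t x \<partial>M) + 4 * (\<integral>x. max (p x - real m) 0 \<partial>M)"
        using phi imx by simp
      also have "\<dots> < e"
      proof -
        have "2 * real m * (\<integral>x. \<phi> t x \<partial>M) \<le> 2 * (real m + 1) * (e / (4 * (real m + 1)))"
          using elim Bochner_Integration.integral_nonneg[of M "\<phi> t"] phb
          by (intro mult_mono) auto
        also have "\<dots> = e / 2" by (simp add: field_simps)
        finally show ?thesis using m by linarith
      qed
      finally show ?case using nn by simp
    qed
  qed
qed

lemma densD: assumes "dens M p"
  shows "p \<in> borel_measurable M" "\<And>x. 0 \<le> p x" "integrable M p"
  using assms by (auto simp: dens_def)

lemma gen_pos: "0 \<le> (\<integral>x. GG b p q x \<partial>M)"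
  by (intro Bochner_Integration.integral_nonneg) (simp add: GG_def)

lemma gen_zero:
  assumes "dens M p" "dens M q"
  shows "(\<integral>x. GG b p q x \<partial>M) = 0 \<longleftrightarrow> (AE x in M. p x = q x)"
proof -
  have "(\<integral>x. GG b p q x \<partial>M) = 0 \<longleftrightarrow> (AE x in M. GG b p q x = 0)"
    using GG_int[OF assms] by (intro integral_nonneg_eq_0_iff_AE) (auto simp: GG_def[abs_def])
  also have "\<dots> \<longleftrightarrow> (AE x in M. p x = q x)"
  proof (rule AE_cong)
    fix x
    show "GG b p q x = 0 \<longleftrightarrow> p x = q x"
    proof
      assume "GG b p q x = 0"
      then have "hh b (p x) = hh b (q x)" by (simp add: GG_def)
      then have "cmod (hh b (p x)) = cmod (hh b (q x))" by simp
      then show "p x = q x" using densD(2)[OF assms(1), of x] densD(2)[OF assms(2), of x] by simp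
    qed (simp add: GG_def)
  qed
  finally show ?thesis .
qed

lemma gen_sym: "GG b p q = GG b q p"
  unfolding GG_def[abs_def] by (simp add: norm_minus_commute)

lemma gen_tri:
  assumes "dens M p" "dens M q" "dens M f"
  shows "(\<integral>x. GG b p q x \<partial>M) \<le> (\<integral>x. GG b p f x \<partial>M) + (\<integral>x. GG b f q x \<partial>M)"
proof -
  have "(\<integral>x. GG b p q x \<partial>M) \<le> (\<integral>x. GG b p f x + GG b f q x \<partial>M)"
  proof (intro Bochner_Integration.integral_mono)
    fix x
    show "GG b p q x \<le> GG b p f x + GG b f q x"
      unfolding GG_def using norm_triangle_ineq[of "hh b (p x) - hh b (f x)" "hh b (f x) - hh b (q x)"] by simp
  qed (use GG_int[OF assms(1,3)] GG_int[OF assms(3,2)] GG_int[OF assms(1,2)] in auto)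
  also have "\<dots> = (\<integral>x. GG b p f x \<partial>M) + (\<integral>x. GG b f q x \<partial>M)"
    using GG_int assms by (intro Bochner_Integration.integral_add) auto
  finally show ?thesis .
qed

lemma gen_le:
  assumes "dens M p" "dens M q"
  shows "(\<integral>x. GG b p q x \<partial>M) \<le> (\<integral>x. p x \<partial>M) + (\<integral>x. q x \<partial>M)"
proof -
  have "(\<integral>x. GG b p q x \<partial>M) \<le> (\<integral>x. p x + q x \<partial>M)"
    using GG_int[OF assms] densD[OF assms(1)] densD[OF assms(2)] GG_le[of p q]
    by (intro Bochner_Integration.integral_mono) auto
  also have "\<dots> = (\<integral>x. p x \<partial>M) + (\<integral>x. q x \<partial>M)"
    using densD[OF assms(1)] densD[OF assms(2)] by (intro Bochner_Integration.integral_add) auto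
  finally show ?thesis .
qed

definition EE :: "real \<Rightarrow> real \<Rightarrow> real" where
  "EE b t = cmod (exp (\<i> * complex_of_real (b * t)) - 1)"

lemma EE_meas[measurable]: "f \<in> borel_measurable M \<Longrightarrow> (\<lambda>x. EE b (f x)) \<in> borel_measurable M"
proof -
  have "continuous_on UNIV (EE b)" unfolding EE_def by (intro continuous_intros)
  then show "f \<in> borel_measurable M \<Longrightarrow> (\<lambda>x. EE b (f x)) \<in> borel_measurable M"
    using borel_measurable_continuous_on by blast
qed

lemma EE_bnd: "0 \<le> EE b t \<and> EE b t \<le> 2" "EE b t \<le> \<bar>b\<bar> * \<bar>t\<bar>"
proof -
  show "0 \<le> EE b t \<and> EE b t \<le> 2" unfolding EE_def using ex1_le2[of "b * t"] by simp
  show "EE b t \<le> \<bar>b\<bar> * \<bar>t\<bar>" unfolding EE_def by (metis abs_mult ex1_le)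
qed

lemma EE_mul: "0 \<le> a \<Longrightarrow> norm (a * EE b t) \<le> norm (2 * a)"
proof -
  assume a: "0 \<le> a"
  have "a * EE b t \<le> a * 2" using EE_bnd(1)[of b t] a by (intro mult_left_mono) auto
  then show ?thesis using a EE_bnd(1)[of b t] by (simp add: abs_mult)
qed

lemma EE_int:
  assumes "integrable M g" "g \<in> borel_measurable M"
  shows "integrable M (\<lambda>x. EE b (g x))" "(\<integral>x. EE b (g x) \<partial>M) \<le> \<bar>b\<bar> * (\<integral>x. \<bar>g x\<bar> \<partial>M)"
proof -
  show i: "integrable M (\<lambda>x. EE b (g x))"
    by (rule Bochner_Integration.integrable_bound[of _ "\<lambda>x. \<bar>b\<bar> * \<bar>g x\<bar>"])
       (use assms EE_bnd in auto)
  have "(\<integral>x. EE b (g x) \<partial>M) \<le> (\<integral>x. \<bar>b\<bar> * \<bar>g x\<bar> \<partial>M)"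
    using i assms EE_bnd by (intro Bochner_Integration.integral_mono) auto
  then show "(\<integral>x. EE b (g x) \<partial>M) \<le> \<bar>b\<bar> * (\<integral>x. \<bar>g x\<bar> \<partial>M)" by simp
qed

lemma EE_tendsto:
  assumes "integrable M g" "g \<in> borel_measurable M"
    and "(c \<longlongrightarrow> 0) F"
  shows "((\<lambda>t. \<integral>x. EE (c t) (g x) \<partial>M) \<longlongrightarrow> 0) F"
proof (rule tendsto_sandwich[of "\<lambda>_. 0" _ _ "\<lambda>t. \<bar>c t\<bar> * (\<integral>x. \<bar>g x\<bar> \<partial>M)"])
  show "\<forall>\<^sub>F t in F. 0 \<le> (\<integral>x. EE (c t) (g x) \<partial>M)"
    using EE_bnd by (intro always_eventually allI Bochner_Integration.integral_nonneg) auto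
  show "\<forall>\<^sub>F t in F. (\<integral>x. EE (c t) (g x) \<partial>M) \<le> \<bar>c t\<bar> * (\<integral>x. \<bar>g x\<bar> \<partial>M)"
    using EE_int(2)[OF assms(1,2)] by (intro always_eventually allI) auto
  show "((\<lambda>t. \<bar>c t\<bar> * (\<integral>x. \<bar>g x\<bar> \<partial>M)) \<longlongrightarrow> 0) F"
    using tendsto_mult[OF tendsto_rabs[OF assms(3)] tendsto_const[of "\<integral>x. \<bar>g x\<bar> \<partial>M"]] by simp
qed simp

lemma gen_lim0:
  assumes dp: "dens M p" and dq: "dens M q"
  shows "((\<lambda>b. \<integral>x. GG b p q x \<partial>M) \<longlongrightarrow> (\<integral>x. \<bar>p x - q x\<bar> \<partial>M)) (at_right 0)"
proof (rule LIM_zero_cancel, rule Lim_null_comparison)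
  note pm[measurable] = densD(1)[OF dp] and qm[measurable] = densD(1)[OF dq]
  have ipq: "integrable M (\<lambda>x. \<bar>p x - q x\<bar>)" using densD(3)[OF dp] densD(3)[OF dq] by auto
  show "\<forall>\<^sub>F b in at_right 0. norm ((\<integral>x. GG b p q x \<partial>M) - (\<integral>x. \<bar>p x - q x\<bar> \<partial>M))
       \<le> (\<integral>x. p x * EE b (p x) \<partial>M) + (\<integral>x. q x * EE b (q x) \<partial>M)"
  proof (intro always_eventually allI)
    fix b
    have pw: "norm (GG b p q x - \<bar>p x - q x\<bar>) \<le> p x * EE b (p x) + q x * EE b (q x)" for x
    proof -
      have "norm (GG b p q x - \<bar>p x - q x\<bar>) = \<bar>cmod (hh b (p x) - hh b (q x)) - cmod (complex_of_real (p x) - complex_of_real (q x))\<bar>"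
        by (simp add: GG_def flip: of_real_diff)
      also have "\<dots> \<le> cmod ((hh b (p x) - hh b (q x)) - (complex_of_real (p x) - complex_of_real (q x)))"
        by (rule norm_triangle_ineq3)
      also have "\<dots> = cmod ((hh b (p x) - complex_of_real (p x)) - (hh b (q x) - complex_of_real (q x)))"
        by (simp add: algebra_simps)
      also have "\<dots> \<le> cmod (hh b (p x) - complex_of_real (p x)) + cmod (hh b (q x) - complex_of_real (q x))"
        by (rule norm_triangle_ineq4)
      also have "\<dots> = p x * EE b (p x) + q x * EE b (q x)"
        using densD(2)[OF dp, of x] densD(2)[OF dq, of x] by (simp add: hh_sub0 EE_def)
      finally show ?thesis .
    qed
    have i1: "integrable M (\<lambda>x. p x * EE b (p x))"
      by (rule Bochner_Integration.integrable_bound[of _ "\<lambda>x. 2 * p x"])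
         (use densD[OF dp] EE_mul in auto)
    have i2: "integrable M (\<lambda>x. q x * EE b (q x))"
      by (rule Bochner_Integration.integrable_bound[of _ "\<lambda>x. 2 * q x"])
         (use densD[OF dq] EE_mul in auto)
    have "norm ((\<integral>x. GG b p q x \<partial>M) - (\<integral>x. \<bar>p x - q x\<bar> \<partial>M)) = norm (\<integral>x. GG b p q x - \<bar>p x - q x\<bar> \<partial>M)"
      using GG_int[OF dp dq] ipq by (subst Bochner_Integration.integral_diff) auto
    also have "\<dots> \<le> (\<integral>x. norm (GG b p q x - \<bar>p x - q x\<bar>) \<partial>M)"
      by (rule integral_norm_bound)
    also have "\<dots> \<le> (\<integral>x. p x * EE b (p x) + q x * EE b (q x) \<partial>M)"
      using pw i1 i2 GG_int[OF dp dq] ipq by (intro Bochner_Integration.integral_mono) auto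
    also have "\<dots> = (\<integral>x. p x * EE b (p x) \<partial>M) + (\<integral>x. q x * EE b (q x) \<partial>M)"
      using i1 i2 by simp
    finally show "norm ((\<integral>x. GG b p q x \<partial>M) - (\<integral>x. \<bar>p x - q x\<bar> \<partial>M))
       \<le> (\<integral>x. p x * EE b (p x) \<partial>M) + (\<integral>x. q x * EE b (q x) \<partial>M)" .
  qed
  have c0: "((\<lambda>b::real. b) \<longlongrightarrow> 0) (at_right 0)" by (rule tendsto_ident_at)
  have k1: "((\<lambda>b. \<integral>x. p x * EE b (p x) \<partial>M) \<longlongrightarrow> 0) (at_right 0)"
    using EE_bnd densD[OF dp] EE_int[OF densD(3)[OF dp] densD(1)[OF dp]] EE_tendsto[OF densD(3)[OF dp] densD(1)[OF dp] c0]
    by (intro K[OF dp, where \<phi>="\<lambda>b x. EE b (p x)"]) auto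
  have k2: "((\<lambda>b. \<integral>x. q x * EE b (q x) \<partial>M) \<longlongrightarrow> 0) (at_right 0)"
    using EE_bnd densD[OF dq] EE_int[OF densD(3)[OF dq] densD(1)[OF dq]] EE_tendsto[OF densD(3)[OF dq] densD(1)[OF dq] c0]
    by (intro K[OF dq, where \<phi>="\<lambda>b x. EE b (q x)"]) auto
  show "((\<lambda>b. (\<integral>x. p x * EE b (p x) \<partial>M) + (\<integral>x. q x * EE b (q x) \<partial>M)) \<longlongrightarrow> 0) (at_right 0)"
    using tendsto_add_zero[OF k1 k2] .
qed

lemma EE_tendsto2:
  assumes "\<And>n. integrable M (g n)" "\<And>n. g n \<in> borel_measurable M"
    and "(\<lambda>n. \<integral>x. \<bar>g n x\<bar> \<partial>M) \<longlonglongrightarrow> 0"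
  shows "(\<lambda>n. \<integral>x. EE b (g n x) \<partial>M) \<longlonglongrightarrow> 0"
proof (rule tendsto_sandwich[of "\<lambda>_. 0" _ _ "\<lambda>n. \<bar>b\<bar> * (\<integral>x. \<bar>g n x\<bar> \<partial>M)"])
  show "\<forall>\<^sub>F n in sequentially. 0 \<le> (\<integral>x. EE b (g n x) \<partial>M)"
    using EE_bnd by (intro always_eventually allI Bochner_Integration.integral_nonneg) auto
  show "\<forall>\<^sub>F n in sequentially. (\<integral>x. EE b (g n x) \<partial>M) \<le> \<bar>b\<bar> * (\<integral>x. \<bar>g n x\<bar> \<partial>M)"
    using EE_int(2)[OF assms(1,2)] by (intro always_eventually allI) auto
  show "(\<lambda>n. \<bar>b\<bar> * (\<integral>x. \<bar>g n x\<bar> \<partial>M)) \<longlonglongrightarrow> 0"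
    using tendsto_mult[OF tendsto_const[of "\<bar>b\<bar>"] assms(3)] by simp
qed simp

lemma gen_cont:
  assumes dp: "dens M p" and dq: "dens M q"
    and dpn: "\<And>n. dens M (pn n)" and dqn: "\<And>n. dens M (qn n)"
    and lp: "(\<lambda>n. \<integral>x. \<bar>pn n x - p x\<bar> \<partial>M) \<longlonglongrightarrow> 0"
    and lq: "(\<lambda>n. \<integral>x. \<bar>qn n x - q x\<bar> \<partial>M) \<longlonglongrightarrow> 0"
  shows "(\<lambda>n. \<integral>x. GG b (pn n) (qn n) x \<partial>M) \<longlonglongrightarrow> (\<integral>x. GG b p q x \<partial>M)"
proof (rule LIM_zero_cancel, rule Lim_null_comparison)
  note pm[measurable] = densD(1)[OF dp] and qm[measurable] = densD(1)[OF dq]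
  note pnm[measurable] = densD(1)[OF dpn] and qnm[measurable] = densD(1)[OF dqn]
  have idp: "integrable M (\<lambda>x. pn n x - p x)" for n using densD(3)[OF dp] densD(3)[OF dpn] by auto
  have idq: "integrable M (\<lambda>x. qn n x - q x)" for n using densD(3)[OF dq] densD(3)[OF dqn] by auto
  have idp': "integrable M (\<lambda>x. \<bar>pn n x - p x\<bar>)" for n using idp by auto
  have idq': "integrable M (\<lambda>x. \<bar>qn n x - q x\<bar>)" for n using idq by auto
  have i1: "integrable M (\<lambda>x. p x * EE b (pn n x - p x))" for n
    by (rule Bochner_Integration.integrable_bound[of _ "\<lambda>x. 2 * p x"])
       (use densD[OF dp] EE_mul in auto)
  have i2: "integrable M (\<lambda>x. q x * EE b (qn n x - q x))" for n
    by (rule Bochner_Integration.integrable_bound[of _ "\<lambda>x. 2 * q x"])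
       (use densD[OF dq] EE_mul in auto)
  show "\<forall>\<^sub>F n in sequentially. norm ((\<integral>x. GG b (pn n) (qn n) x \<partial>M) - (\<integral>x. GG b p q x \<partial>M))
       \<le> ((\<integral>x. \<bar>pn n x - p x\<bar> \<partial>M) + (\<integral>x. p x * EE b (pn n x - p x) \<partial>M))
         + ((\<integral>x. \<bar>qn n x - q x\<bar> \<partial>M) + (\<integral>x. q x * EE b (qn n x - q x) \<partial>M))"
  proof (intro always_eventually allI)
    fix n
    have pw: "norm (GG b (pn n) (qn n) x - GG b p q x) \<le> (\<bar>pn n x - p x\<bar> + p x * EE b (pn n x - p x))
        + (\<bar>qn n x - q x\<bar> + q x * EE b (qn n x - q x))" for x
    proof -
      have "norm (GG b (pn n) (qn n) x - GG b p q x) \<le> cmod ((hh b (pn n x) - hh b (qn n x)) - (hh b (p x) - hh b (q x)))"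
        unfolding GG_def real_norm_def by (rule norm_triangle_ineq3)
      also have "\<dots> = cmod ((hh b (pn n x) - hh b (p x)) - (hh b (qn n x) - hh b (q x)))"
        by (simp add: algebra_simps)
      also have "\<dots> \<le> cmod (hh b (pn n x) - hh b (p x)) + cmod (hh b (qn n x) - hh b (q x))"
        by (rule norm_triangle_ineq4)
      also have "\<dots> \<le> (\<bar>pn n x - p x\<bar> + p x * EE b (pn n x - p x))
        + (\<bar>qn n x - q x\<bar> + q x * EE b (qn n x - q x))"
        using hh_lip[of b "pn n x" "p x"] hh_lip[of b "qn n x" "q x"] densD(2)[OF dp, of x] densD(2)[OF dq, of x]
        unfolding EE_def by (intro add_mono) auto
      finally show ?thesis .
    qed
    have "norm ((\<integral>x. GG b (pn n) (qn n) x \<partial>M) - (\<integral>x. GG b p q x \<partial>M))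
        = norm (\<integral>x. GG b (pn n) (qn n) x - GG b p q x \<partial>M)"
      using GG_int[OF dp dq] GG_int[OF dpn dqn] by (subst Bochner_Integration.integral_diff) auto
    also have "\<dots> \<le> (\<integral>x. norm (GG b (pn n) (qn n) x - GG b p q x) \<partial>M)"
      by (rule integral_norm_bound)
    also have "\<dots> \<le> (\<integral>x. (\<bar>pn n x - p x\<bar> + p x * EE b (pn n x - p x))
        + (\<bar>qn n x - q x\<bar> + q x * EE b (qn n x - q x)) \<partial>M)"
      using pw i1 i2 idp' idq' GG_int[OF dp dq] GG_int[OF dpn dqn]
      by (intro Bochner_Integration.integral_mono) auto
    also have "\<dots> = ((\<integral>x. \<bar>pn n x - p x\<bar> \<partial>M) + (\<integral>x. p x * EE b (pn n x - p x) \<partial>M))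
         + ((\<integral>x. \<bar>qn n x - q x\<bar> \<partial>M) + (\<integral>x. q x * EE b (qn n x - q x) \<partial>M))"
      using i1 i2 idp' idq' by simp
    finally show "norm ((\<integral>x. GG b (pn n) (qn n) x \<partial>M) - (\<integral>x. GG b p q x \<partial>M))
       \<le> ((\<integral>x. \<bar>pn n x - p x\<bar> \<partial>M) + (\<integral>x. p x * EE b (pn n x - p x) \<partial>M))
         + ((\<integral>x. \<bar>qn n x - q x\<bar> \<partial>M) + (\<integral>x. q x * EE b (qn n x - q x) \<partial>M))" .
  qed
  have k1: "(\<lambda>n. \<integral>x. p x * EE b (pn n x - p x) \<partial>M) \<longlonglongrightarrow> 0"
    using EE_bnd densD[OF dp] EE_int(1)[OF idp] EE_tendsto2[of M "\<lambda>n x. pn n x - p x", OF idp _ lp]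
    by (intro K[OF dp, where \<phi>="\<lambda>n x. EE b (pn n x - p x)"]) auto
  have k2: "(\<lambda>n. \<integral>x. q x * EE b (qn n x - q x) \<partial>M) \<longlonglongrightarrow> 0"
    using EE_bnd densD[OF dq] EE_int(1)[OF idq] EE_tendsto2[of M "\<lambda>n x. qn n x - q x", OF idq _ lq]
    by (intro K[OF dq, where \<phi>="\<lambda>n x. EE b (qn n x - q x)"]) auto
  show "(\<lambda>n. ((\<integral>x. \<bar>pn n x - p x\<bar> \<partial>M) + (\<integral>x. p x * EE b (pn n x - p x) \<partial>M))
         + ((\<integral>x. \<bar>qn n x - q x\<bar> \<partial>M) + (\<integral>x. q x * EE b (qn n x - q x) \<partial>M))) \<longlonglongrightarrow> 0"
    using tendsto_add_zero[OF tendsto_add_zero[OF lp k1] tendsto_add_zero[OF lq k2]] .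
qed

lemma CM_eq: "CM b p q = 1/2 * (\<integral>x. GG b p q x \<partial>lborel)"
  by (simp add: CM_def GG_def hh_def)

lemma infsum_int:
  fixes f :: "'a \<Rightarrow> real"
  assumes "integrable (count_space UNIV) f"
  shows "infsum f UNIV = (\<integral>x. f x \<partial>count_space UNIV)"
  using infsetsum_infsum[of f UNIV] assms by (simp add: abs_summable_on_def infsetsum_def)

lemma dens_pmf: "dens (count_space UNIV) (pmf P)"
  by (simp add: dens_def integrable_pmf)

lemma CMd_eq: "CMd b P Q = 1/2 * (\<integral>x. GG b (pmf P) (pmf Q) x \<partial>count_space UNIV)"
proof -
  have "CMd b P Q = 1/2 * infsum (GG b (pmf P) (pmf Q)) UNIV"
    unfolding CMd_def GG_def[abs_def] hh_def by simp
  then show ?thesis using infsum_int[OF GG_int[OF dens_pmf dens_pmf]] by simp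
qed

lemma TVd_sum: "(\<Sum>\<^sub>\<infinity>x. \<bar>pmf P x - pmf Q x\<bar>) = (\<integral>x. \<bar>pmf P x - pmf Q x\<bar> \<partial>count_space UNIV)"
  by (rule infsum_int) (intro integrable_abs Bochner_Integration.integrable_diff integrable_pmf)

lemma pmf_int1: "(\<integral>x. pmf P x \<partial>count_space UNIV) = 1"
  by (simp add: integral_pmf)

lemma is_dens: "is_density p \<Longrightarrow> dens lborel p"
  by (simp add: is_density_def dens_def)

theorem mainTheorem10:
  fixes \<beta> :: real and p q f :: "real \<Rightarrow> real" and P Q F :: "'a pmf"
  assumes beta: "\<beta> > 0"
    and dens: "is_density p" "is_density q" "is_density f"
  shows
   "(CM \<beta> p q \<ge> 0 \<and> (CM \<beta> p q = 0 \<longleftrightarrow> (AE x in lborel. p x = q x))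
     \<and> CM \<beta> p q = CM \<beta> q p
     \<and> CM \<beta> p q \<le> CM \<beta> p f + CM \<beta> f q
     \<and> (0 \<le> CM \<beta> p q \<and> CM \<beta> p q \<le> 1)
     \<and> ((\<lambda>b. CM b p q) \<longlongrightarrow> 1/2 * (\<integral>x. \<bar>p x - q x\<bar> \<partial>lborel)) (at_right 0)
     \<and> 1/2 * (\<integral>x. \<bar>p x - q x\<bar> \<partial>lborel) = TV p q
     \<and> (\<forall>pn qn :: nat \<Rightarrow> real \<Rightarrow> real.
          (\<forall>n. is_density (pn n) \<and> is_density (qn n))
          \<and> ((\<lambda>n. \<integral>x. \<bar>pn n x - p x\<bar> \<partial>lborel) \<longlonglongrightarrow> 0)
          \<and> ((\<lambda>n. \<integral>x. \<bar>qn n x - q x\<bar> \<partial>lborel) \<longlonglongrightarrow> 0)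
          \<longrightarrow> ((\<lambda>n. CM \<beta> (pn n) (qn n)) \<longlonglongrightarrow> CM \<beta> p q)))
    \<and>
    (CMd \<beta> P Q \<ge> 0 \<and> (CMd \<beta> P Q = 0 \<longleftrightarrow> (\<forall>x. pmf P x = pmf Q x))
     \<and> CMd \<beta> P Q = CMd \<beta> Q P
     \<and> CMd \<beta> P Q \<le> CMd \<beta> P F + CMd \<beta> F Q
     \<and> (0 \<le> CMd \<beta> P Q \<and> CMd \<beta> P Q \<le> 1)
     \<and> ((\<lambda>b. CMd b P Q) \<longlongrightarrow> 1/2 * (\<Sum>\<^sub>\<infinity>x. \<bar>pmf P x - pmf Q x\<bar>)) (at_right 0)
     \<and> 1/2 * (\<Sum>\<^sub>\<infinity>x. \<bar>pmf P x - pmf Q x\<bar>) = TVd P Q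
     \<and> (\<forall>Pn Qn :: nat \<Rightarrow> 'a pmf.
          ((\<lambda>n. \<Sum>\<^sub>\<infinity>x. \<bar>pmf (Pn n) x - pmf P x\<bar>) \<longlonglongrightarrow> 0)
          \<and> ((\<lambda>n. \<Sum>\<^sub>\<infinity>x. \<bar>pmf (Qn n) x - pmf Q x\<bar>) \<longlonglongrightarrow> 0)
          \<longrightarrow> ((\<lambda>n. CMd \<beta> (Pn n) (Qn n)) \<longlonglongrightarrow> CMd \<beta> P Q)))"
proof (intro conjI)
  have dp: "dens lborel p" and dq: "dens lborel q" and df: "dens lborel f"
    using dens is_dens by auto
  have ip: "(\<integral>x. p x \<partial>lborel) = 1" and iq: "(\<integral>x. q x \<partial>lborel) = 1"
    using dens by (auto simp: is_density_def)
  show "CM \<beta> p q \<ge> 0" "0 \<le> CM \<beta> p q" unfolding CM_eq using gen_pos by auto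
  show "CM \<beta> p q = 0 \<longleftrightarrow> (AE x in lborel. p x = q x)" unfolding CM_eq using gen_zero[OF dp dq] by simp
  show "CM \<beta> p q = CM \<beta> q p" unfolding CM_eq by (simp add: gen_sym)
  show "CM \<beta> p q \<le> CM \<beta> p f + CM \<beta> f q" unfolding CM_eq using gen_tri[OF dp dq df] by simp
  show "CM \<beta> p q \<le> 1" unfolding CM_eq using gen_le[OF dp dq] ip iq by simp
  show "((\<lambda>b. CM b p q) \<longlongrightarrow> 1/2 * (\<integral>x. \<bar>p x - q x\<bar> \<partial>lborel)) (at_right 0)"
    unfolding CM_eq by (intro tendsto_mult_left gen_lim0 dp dq)
  show "1/2 * (\<integral>x. \<bar>p x - q x\<bar> \<partial>lborel) = TV p q" by (simp add: TV_def)
  show "\<forall>pn qn :: nat \<Rightarrow> real \<Rightarrow> real.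
          (\<forall>n. is_density (pn n) \<and> is_density (qn n))
          \<and> ((\<lambda>n. \<integral>x. \<bar>pn n x - p x\<bar> \<partial>lborel) \<longlonglongrightarrow> 0)
          \<and> ((\<lambda>n. \<integral>x. \<bar>qn n x - q x\<bar> \<partial>lborel) \<longlonglongrightarrow> 0)
          \<longrightarrow> ((\<lambda>n. CM \<beta> (pn n) (qn n)) \<longlonglongrightarrow> CM \<beta> p q)"
  proof (intro allI impI)
    fix pn qn :: "nat \<Rightarrow> real \<Rightarrow> real"
    assume a: "(\<forall>n. is_density (pn n) \<and> is_density (qn n))
          \<and> ((\<lambda>n. \<integral>x. \<bar>pn n x - p x\<bar> \<partial>lborel) \<longlonglongrightarrow> 0)
          \<and> ((\<lambda>n. \<integral>x. \<bar>qn n x - q x\<bar> \<partial>lborel) \<longlonglongrightarrow> 0)"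
    then show "(\<lambda>n. CM \<beta> (pn n) (qn n)) \<longlonglongrightarrow> CM \<beta> p q"
      unfolding CM_eq using is_dens by (intro tendsto_mult_left gen_cont[OF dp dq]) auto
  qed
next
  have dP: "dens (count_space UNIV) (pmf P)" and dQ: "dens (count_space UNIV) (pmf Q)"
    and dF: "dens (count_space UNIV) (pmf F)" by (rule dens_pmf)+
  show "CMd \<beta> P Q \<ge> 0" "0 \<le> CMd \<beta> P Q" unfolding CMd_eq using gen_pos by auto
  show "CMd \<beta> P Q = 0 \<longleftrightarrow> (\<forall>x. pmf P x = pmf Q x)" unfolding CMd_eq
    using gen_zero[OF dP dQ] by (simp add: AE_count_space)
  show "CMd \<beta> P Q = CMd \<beta> Q P" unfolding CMd_eq by (simp add: gen_sym)
  show "CMd \<beta> P Q \<le> CMd \<beta> P F + CMd \<beta> F Q" unfolding CMd_eq using gen_tri[OF dP dQ dF] by simp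
  show "CMd \<beta> P Q \<le> 1" unfolding CMd_eq using gen_le[OF dP dQ] pmf_int1[of P] pmf_int1[of Q] by simp
  show "((\<lambda>b. CMd b P Q) \<longlongrightarrow> 1/2 * (\<Sum>\<^sub>\<infinity>x. \<bar>pmf P x - pmf Q x\<bar>)) (at_right 0)"
    unfolding CMd_eq TVd_sum by (intro tendsto_mult_left gen_lim0 dP dQ)
  show "1/2 * (\<Sum>\<^sub>\<infinity>x. \<bar>pmf P x - pmf Q x\<bar>) = TVd P Q" by (simp add: TVd_def)
  show "\<forall>Pn Qn :: nat \<Rightarrow> 'a pmf.
          ((\<lambda>n. \<Sum>\<^sub>\<infinity>x. \<bar>pmf (Pn n) x - pmf P x\<bar>) \<longlonglongrightarrow> 0)
          \<and> ((\<lambda>n. \<Sum>\<^sub>\<infinity>x. \<bar>pmf (Qn n) x - pmf Q x\<bar>) \<longlonglongrightarrow> 0)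
          \<longrightarrow> ((\<lambda>n. CMd \<beta> (Pn n) (Qn n)) \<longlonglongrightarrow> CMd \<beta> P Q)"
  proof (intro allI impI)
    fix Pn Qn :: "nat \<Rightarrow> 'a pmf"
    assume "((\<lambda>n. \<Sum>\<^sub>\<infinity>x. \<bar>pmf (Pn n) x - pmf P x\<bar>) \<longlonglongrightarrow> 0)
          \<and> ((\<lambda>n. \<Sum>\<^sub>\<infinity>x. \<bar>pmf (Qn n) x - pmf Q x\<bar>) \<longlonglongrightarrow> 0)"
    then have l1: "(\<lambda>n. \<integral>x. \<bar>pmf (Pn n) x - pmf P x\<bar> \<partial>count_space UNIV) \<longlonglongrightarrow> 0"
      and l2: "(\<lambda>n. \<integral>x. \<bar>pmf (Qn n) x - pmf Q x\<bar> \<partial>count_space UNIV) \<longlonglongrightarrow> 0"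
      unfolding TVd_sum by auto
    show "(\<lambda>n. CMd \<beta> (Pn n) (Qn n)) \<longlonglongrightarrow> CMd \<beta> P Q"
      unfolding CMd_eq
      by (intro tendsto_mult_left gen_cont[OF dP dQ, where pn="\<lambda>n. pmf (Pn n)" and qn="\<lambda>n. pmf (Qn n)"] dens_pmf l1 l2)
  qed
qed

end
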